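(* Let $(A,\leq,\cdot,/)$ be a narhoop and let $N$ be a nonempty normal subnarhoop of $A$. Define a relation $\preceq_N$ on $A$ by $x\preceq_N y$ iff $y/x\in N$. Then: (1) for all $x,y,z\in A$, $x\preceq_N y$ implies $xz\preceq_N yz$; (2) for all $x,y,z\in A$, $x\preceq_N y$ implies $x/z\preceq_N y/z$; (3) $\preceq_N$ is a preorder (reflexive and transitive); in particular $y/y\in N$ for all $y\in A$.
   Context: Write $xy$ for $x\cdot y$; $\cdot$ binds more strongly than $/$, and $/$ binds more strongly than $\sqcap$, where $x\sqcap y := (x/y)y$. A right-residuated magma is a structure $(A,\leq,\cdot,/)$ where $(A,\leq)$ is a poset and $xy\leq z\iff x\leq z/y$ for all $x,y,z\in A$. A narhoop is a right-residuated magma such that for all $x,y$: $x\leq y\iff x\sqcap y = x = y\sqcap x$. For $x,y\in A$ define maps $A\to A$ by $\phi_{1,x,y}(z)=((zx)y)/(xy)$, $\phi_{2,x,y}(z)=((zx)/y)/(x/y)$, $\phi_{3,x,y}(z)=(x(zy))/(xy)$, $\phi_{4,x,y}(z)=(x/(zy))/(x/y)$, $\phi_{5,x,y}(z)=(xy)/(x(zy))$, $\phi_{6,x,y}(z)=(x/y)/(x/(zy))$; $\mathrm{Inn}(A)$ is the semigroup of maps generated by all of these under composition. A nonempty subset $N\subseteq A$ is a normal subnarhoop if (i) $N$ is closed under $\cdot$ and $/$; (ii) whenever $x\leq y$ and $x\in N$, then $y\in N$; (iii) $\phi(N)\subseteq N$ for all $\phi\in\mathrm{Inn}(A)$. *)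

theory Defs
  imports Main
begin

text \<open>A right-residuated magma on a type 'a: a partial order le, a multiplication m
  and a right residual d (written x / y = d x y), with m x y \<le> z iff x \<le> d z y.\<close>

definition right_residuated_magma ::
  "('a \<Rightarrow> 'a \<Rightarrow> bool) \<Rightarrow> ('a \<Rightarrow> 'a \<Rightarrow> 'a) \<Rightarrow> ('a \<Rightarrow> 'a \<Rightarrow> 'a) \<Rightarrow> bool" where
  "right_residuated_magma le m d \<longleftrightarrow>
     partial_order_on UNIV {(x, y). le x y} \<and>
     (\<forall>x y z. le (m x y) z \<longleftrightarrow> le x (d z y))"

definition meetop :: "('a \<Rightarrow> 'a \<Rightarrow> 'a) \<Rightarrow> ('a \<Rightarrow> 'a \<Rightarrow> 'a) \<Rightarrow> 'a \<Rightarrow> 'a \<Rightarrow> 'a" where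
  "meetop m d x y = m (d x y) y"

definition narhoop ::
  "('a \<Rightarrow> 'a \<Rightarrow> bool) \<Rightarrow> ('a \<Rightarrow> 'a \<Rightarrow> 'a) \<Rightarrow> ('a \<Rightarrow> 'a \<Rightarrow> 'a) \<Rightarrow> bool" where
  "narhoop le m d \<longleftrightarrow> right_residuated_magma le m d \<and>
     (\<forall>x y. le x y \<longleftrightarrow> (meetop m d x y = x \<and> x = meetop m d y x))"

definition inner_gens :: "('a \<Rightarrow> 'a \<Rightarrow> 'a) \<Rightarrow> ('a \<Rightarrow> 'a \<Rightarrow> 'a) \<Rightarrow> ('a \<Rightarrow> 'a) set" where
  "inner_gens m d = (\<Union>x. \<Union>y.
     { (\<lambda>z. d (m (m z x) y) (m x y)),
       (\<lambda>z. d (d (m z x) y) (d x y)),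
       (\<lambda>z. d (m x (m z y)) (m x y)),
       (\<lambda>z. d (d x (m z y)) (d x y)),
       (\<lambda>z. d (m x y) (m x (m z y))),
       (\<lambda>z. d (d x y) (d x (m z y))) })"

inductive_set Inn :: "('a \<Rightarrow> 'a \<Rightarrow> 'a) \<Rightarrow> ('a \<Rightarrow> 'a \<Rightarrow> 'a) \<Rightarrow> ('a \<Rightarrow> 'a) set"
  for m d where
  gen: "\<phi> \<in> inner_gens m d \<Longrightarrow> \<phi> \<in> Inn m d"
| comp: "\<phi> \<in> Inn m d \<Longrightarrow> \<psi> \<in> Inn m d \<Longrightarrow> \<phi> \<circ> \<psi> \<in> Inn m d"

definition normal_subnarhoop ::
  "('a \<Rightarrow> 'a \<Rightarrow> bool) \<Rightarrow> ('a \<Rightarrow> 'a \<Rightarrow> 'a) \<Rightarrow> ('a \<Rightarrow> 'a \<Rightarrow> 'a) \<Rightarrow> 'a set \<Rightarrow> bool" where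
  "normal_subnarhoop le m d N \<longleftrightarrow>
     N \<noteq> {} \<and>
     (\<forall>x\<in>N. \<forall>y\<in>N. m x y \<in> N \<and> d x y \<in> N) \<and>
     (\<forall>x y. le x y \<and> x \<in> N \<longrightarrow> y \<in> N) \<and>
     (\<forall>\<phi>\<in>Inn m d. \<phi> ` N \<subseteq> N)"

definition precN :: "('a \<Rightarrow> 'a \<Rightarrow> 'a) \<Rightarrow> 'a set \<Rightarrow> 'a \<Rightarrow> 'a \<Rightarrow> bool" where
  "precN d N x y \<longleftrightarrow> d y x \<in> N"

end

theory Submission
  imports Defs
begin

theorem mainTheorem13:
  fixes le :: "'a \<Rightarrow> 'a \<Rightarrow> bool" and m d :: "'a \<Rightarrow> 'a \<Rightarrow> 'a" and N :: "'a set"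
  assumes "narhoop le m d"
    and "normal_subnarhoop le m d N"
  shows "(\<forall>x y z. precN d N x y \<longrightarrow> precN d N (m x z) (m y z))
    \<and> (\<forall>x y z. precN d N x y \<longrightarrow> precN d N (d x z) (d y z))
    \<and> (\<forall>x. precN d N x x)
    \<and> (\<forall>x y z. precN d N x y \<longrightarrow> precN d N y z \<longrightarrow> precN d N x z)
    \<and> (\<forall>y. d y y \<in> N)"
proof -
  have rrm: "right_residuated_magma le m d" and nar: "\<And>x y. le x y \<longleftrightarrow> (m (d x y) y = x \<and> x = m (d y x) x)"
    using assms(1) unfolding narhoop_def meetop_def by auto
  have po: "partial_order_on UNIV {(x, y). le x y}" and res: "\<And>x y z. le (m x y) z \<longleftrightarrow> le x (d z y)"
    using rrm unfolding right_residuated_magma_def by auto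
  have refl: "\<And>x. le x x" using po unfolding partial_order_on_def preorder_on_def refl_on_def by auto
  have trans: "\<And>x y z. le x y \<Longrightarrow> le y z \<Longrightarrow> le x z"
    using po unfolding partial_order_on_def preorder_on_def trans_def by blast
  have Nne: "N \<noteq> {}" and clm: "\<And>a b. a \<in> N \<Longrightarrow> b \<in> N \<Longrightarrow> m a b \<in> N"
    and cld: "\<And>a b. a \<in> N \<Longrightarrow> b \<in> N \<Longrightarrow> d a b \<in> N"
    and up: "\<And>a b. le a b \<Longrightarrow> a \<in> N \<Longrightarrow> b \<in> N"
    and inn: "\<And>\<phi> a. \<phi> \<in> Inn m d \<Longrightarrow> a \<in> N \<Longrightarrow> \<phi> a \<in> N"
    using assms(2) unfolding normal_subnarhoop_def by blast+
  have g1: "\<And>x y. (\<lambda>z. d (m (m z x) y) (m x y)) \<in> Inn m d"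
    by (rule Inn.gen) (unfold inner_gens_def, blast)
  have g2: "\<And>x y. (\<lambda>z. d (d (m z x) y) (d x y)) \<in> Inn m d"
    by (rule Inn.gen) (unfold inner_gens_def, blast)
  have g3: "\<And>x y. (\<lambda>z. d (m x (m z y)) (m x y)) \<in> Inn m d"
    by (rule Inn.gen) (unfold inner_gens_def, blast)
  have g4: "\<And>x y. (\<lambda>z. d (d x (m z y)) (d x y)) \<in> Inn m d"
    by (rule Inn.gen) (unfold inner_gens_def, blast)
  have cancel: "\<And>a b. le (m (d b a) a) b" using res refl by blast
  have unit: "\<And>a. m (d a a) a = a" using nar refl by blast
  have monom: "\<And>a b c. le a b \<Longrightarrow> le (m a c) (m b c)"
  proof -
    fix a b c assume "le a b"
    moreover have "le b (d (m b c) c)" using res refl by blast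
    ultimately show "le (m a c) (m b c)" using res trans by blast
  qed
  have monod: "\<And>a b c. le a b \<Longrightarrow> le (d a c) (d b c)"
    using cancel trans res by blast
  have LM: "\<And>a b. a \<in> N \<Longrightarrow> d b a \<in> N \<Longrightarrow> b \<in> N"
    using clm cancel up by blast
  have P1: "\<forall>x y z. precN d N x y \<longrightarrow> precN d N (m x z) (m y z)"
  proof (intro allI impI)
    fix x y z assume "precN d N x y"
    hence p: "d y x \<in> N" by (simp add: precN_def)
    have "d (m (m (d y x) x) z) (m x z) \<in> N" using inn[OF g1 p] by simp
    moreover have "le (d (m (m (d y x) x) z) (m x z)) (d (m y z) (m x z))"
      by (intro monod monom cancel)
    ultimately show "precN d N (m x z) (m y z)" using up by (simp add: precN_def)
  qed
  have P2: "\<forall>x y z. precN d N x y \<longrightarrow> precN d N (d x z) (d y z)"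
  proof (intro allI impI)
    fix x y z assume "precN d N x y"
    hence p: "d y x \<in> N" by (simp add: precN_def)
    have "d (d (m (d y x) x) z) (d x z) \<in> N" using inn[OF g2 p] by simp
    moreover have "le (d (d (m (d y x) x) z) (d x z)) (d (d y z) (d x z))"
      by (intro monod cancel)
    ultimately show "precN d N (d x z) (d y z)" using up by (simp add: precN_def)
  qed
  have P5: "\<forall>y. d y y \<in> N"
  proof
    fix Y
    obtain n where n: "n \<in> N" using Nne by blast
    have u: "d n n \<in> N" using cld n by blast
    define b where "b = d (m Y n) n"
    have "d (d (m Y n) (m (d n n) n)) (d (m Y n) n) \<in> N" using inn[OF g4[of "m Y n" n] u] by simp
    hence bb: "d b b \<in> N" unfolding b_def by (simp only: unit)
    have "d (m (d Y b) (m (d b b) b)) (m (d Y b) b) \<in> N" using inn[OF g3 bb] by simp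
    hence c: "d (m (d Y b) b) (m (d Y b) b) \<in> N" by (simp add: unit)
    have "le Y b" unfolding b_def using res refl by blast
    hence "m (d Y b) b = Y" using nar by blast
    thus "d Y Y \<in> N" using c by simp
  qed
  have P4: "\<forall>x y z. precN d N x y \<longrightarrow> precN d N y z \<longrightarrow> precN d N x z"
  proof (intro allI impI)
    fix x y z assume a: "precN d N x y" "precN d N y z"
    hence "precN d N (d y x) (d z x)" using P2 by blast
    hence "d (d z x) (d y x) \<in> N" by (simp add: precN_def)
    moreover have "d y x \<in> N" using a by (simp add: precN_def)
    ultimately have "d z x \<in> N" by (rule LM[rotated])
    thus "precN d N x z" by (simp add: precN_def)
  qed
  show ?thesis using P1 P2 P4 P5 by (simp add: precN_def)
qed

end
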